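(* Suppose $P_{II*}\subseteq P_{II}$ is a chain (totally ordered by inclusion). Then for filters $\Xi,\Upsilon\in P_{III*}$, $\mathcal C_{\Xi\text{-unc}}=\mathcal C_{\Upsilon\text{-unc}}$ if and only if $\Xi=\Upsilon$.
   Context: Let $n\ge1$, $L=\{1,\dots,n\}$, and for $i\in L$ let $\mathcal H_i$ be a Hilbert space with $1<\dim\mathcal H_i<\infty$; $\mathcal H_X=\bigotimes_{i\in X}\mathcal H_i$ and $\mathcal D_X$ is the set of density operators on $\mathcal H_X$. $P_I$ is the set of partitions of $L$ ordered by refinement. For $\xi\in P_I$, $\mathcal D_{\xi\text{-unc}}=\{\varrho\in\mathcal D_L:\varrho=\bigotimes_{X\in\xi}\varrho_X,\ \varrho_X\in\mathcal D_X\}$, and for $S\subseteq P_I$, $\mathcal D_{S\text{-unc}}=\bigcup_{\xi\in S}\mathcal D_{\xi\text{-unc}}$. $P_{II}$ is the set of nonempty down-sets of $P_I$, ordered by inclusion; $P_{II*}$ is a nonempty subset of $P_{II}$ and $P_{III*}$ is the set of nonempty up-sets of $P_{II*}$. For $\Xi\in P_{III*}$: $\overline\Xi=P_{II*}\setminus\Xi$ and $\mathcal C_{\Xi\text{-unc}}=\bigcap_{\boldsymbol\xi'\in\overline\Xi}(\mathcal D_L\setminus\mathcal D_{\boldsymbol\xi'\text{-unc}})\cap\bigcap_{\boldsymbol\xi\in\Xi}\mathcal D_{\boldsymbol\xi\text{-unc}}$. *)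

theory Defs
  imports Complex_Main "HOL-Library.Disjoint_Sets"
begin

text \<open>Local dimensions: site i carries a Hilbert space of dimension d i, identified
with C^(d i) via its computational basis. The Hilbert space H_X of a subsystem X has the
product basis indexed by functions f with f i < d i for i in X and f i = 0 outside X.
Operators on H_X are represented by their matrix entries w.r.t. this basis
(entries outside the basis are required to be zero).\<close>

type_synonym op = "(nat \<Rightarrow> nat) \<Rightarrow> (nat \<Rightarrow> nat) \<Rightarrow> complex"

definition basis_idx :: "(nat \<Rightarrow> nat) \<Rightarrow> nat set \<Rightarrow> (nat \<Rightarrow> nat) set" where
  "basis_idx d X = {f. (\<forall>i\<in>X. f i < d i) \<and> (\<forall>i. i \<notin> X \<longrightarrow> f i = 0)}"

definition restr :: "(nat \<Rightarrow> nat) \<Rightarrow> nat set \<Rightarrow> (nat \<Rightarrow> nat)" where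
  "restr f X = (\<lambda>i. if i \<in> X then f i else 0)"

definition density_ops :: "(nat \<Rightarrow> nat) \<Rightarrow> nat set \<Rightarrow> op set" where
  "density_ops d X = {\<rho>.
     (\<forall>f g. f \<notin> basis_idx d X \<or> g \<notin> basis_idx d X \<longrightarrow> \<rho> f g = 0) \<and>
     (\<forall>f\<in>basis_idx d X. \<forall>g\<in>basis_idx d X. \<rho> g f = cnj (\<rho> f g)) \<and>
     (\<forall>v :: (nat \<Rightarrow> nat) \<Rightarrow> complex.
        Im (\<Sum>f\<in>basis_idx d X. \<Sum>g\<in>basis_idx d X. cnj (v f) * \<rho> f g * v g) = 0 \<and>
        Re (\<Sum>f\<in>basis_idx d X. \<Sum>g\<in>basis_idx d X. cnj (v f) * \<rho> f g * v g) \<ge> 0) \<and>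
     (\<Sum>f\<in>basis_idx d X. \<rho> f f) = 1}"

definition tensor_over :: "(nat \<Rightarrow> nat) \<Rightarrow> nat set \<Rightarrow> nat set set \<Rightarrow> (nat set \<Rightarrow> op) \<Rightarrow> op" where
  "tensor_over d L \<xi> \<rho>s = (\<lambda>f g.
     if f \<in> basis_idx d L \<and> g \<in> basis_idx d L
     then (\<Prod>X\<in>\<xi>. \<rho>s X (restr f X) (restr g X)) else 0)"

definition PI :: "nat set \<Rightarrow> nat set set set" where
  "PI L = {\<xi>. partition_on L \<xi>}"

definition refines :: "nat set set \<Rightarrow> nat set set \<Rightarrow> bool" where
  "refines \<upsilon> \<xi> \<longleftrightarrow> (\<forall>X\<in>\<upsilon>. \<exists>Y\<in>\<xi>. X \<subseteq> Y)"

definition PII :: "nat set \<Rightarrow> nat set set set set" where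
  "PII L = {S. S \<subseteq> PI L \<and> S \<noteq> {} \<and>
              (\<forall>\<xi>\<in>S. \<forall>\<upsilon>\<in>PI L. refines \<upsilon> \<xi> \<longrightarrow> \<upsilon> \<in> S)}"

definition PIII :: "nat set set set set \<Rightarrow> nat set set set set set" where
  "PIII P2 = {\<Xi>. \<Xi> \<subseteq> P2 \<and> \<Xi> \<noteq> {} \<and> (\<forall>a\<in>\<Xi>. \<forall>b\<in>P2. a \<subseteq> b \<longrightarrow> b \<in> \<Xi>)}"

definition D_unc :: "(nat \<Rightarrow> nat) \<Rightarrow> nat set \<Rightarrow> nat set set \<Rightarrow> op set" where
  "D_unc d L \<xi> = {\<rho>. \<rho> \<in> density_ops d L \<and>
      (\<exists>\<rho>s. (\<forall>X\<in>\<xi>. \<rho>s X \<in> density_ops d X) \<and> \<rho> = tensor_over d L \<xi> \<rho>s)}"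

definition DS_unc :: "(nat \<Rightarrow> nat) \<Rightarrow> nat set \<Rightarrow> nat set set set \<Rightarrow> op set" where
  "DS_unc d L S = (\<Union>\<xi>\<in>S. D_unc d L \<xi>)"

definition C_unc :: "(nat \<Rightarrow> nat) \<Rightarrow> nat set \<Rightarrow> nat set set set set \<Rightarrow> nat set set set set \<Rightarrow> op set" where
  "C_unc d L P2 \<Xi> = (\<Inter>\<xi>'\<in>P2 - \<Xi>. density_ops d L - DS_unc d L \<xi>') \<inter> (\<Inter>\<xi>\<in>\<Xi>. DS_unc d L \<xi>)"

end

theory Submission imports Defs begin

definition ind :: "nat set \<Rightarrow> nat \<Rightarrow> nat" where
  "ind X = (\<lambda>i. if i \<in> X then 1 else 0)"

lemma finite_basis:
  assumes "finite X" shows "finite (basis_idx d X)"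
proof -
  have "basis_idx d X \<subseteq> (\<lambda>g i. if i \<in> X then g i else 0) ` PiE X (\<lambda>i. {..<d i})"
  proof
    fix f assume f: "f \<in> basis_idx d X"
    have "restrict f X \<in> PiE X (\<lambda>i. {..<d i})" using f by (auto simp: basis_idx_def)
    moreover have "f = (\<lambda>i. if i \<in> X then restrict f X i else 0)"
      using f by (auto simp: basis_idx_def)
    ultimately show "f \<in> (\<lambda>g i. if i \<in> X then g i else 0) ` PiE X (\<lambda>i. {..<d i})" by blast
  qed
  moreover have "finite (PiE X (\<lambda>i. {..<d i}))" using assms by (simp add: finite_PiE)
  ultimately show ?thesis by (meson finite_imageI finite_subset)
qed

lemma diag_density:
  assumes fin: "finite X" and T: "T \<subseteq> basis_idx d X" and c: "c \<ge> 0" and tr: "real (card T) * c = 1"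
  shows "(\<lambda>f g. if f = g \<and> f \<in> T then complex_of_real c else 0) \<in> density_ops d X"
proof -
  let ?B = "basis_idx d X"
  let ?r = "(\<lambda>f g. if f = g \<and> f \<in> T then complex_of_real c else 0)"
  have fB: "finite ?B" using fin by (rule finite_basis)
  have fT: "finite T" using fB T finite_subset by blast
  have quad: "(\<Sum>f\<in>?B. \<Sum>g\<in>?B. cnj (v f) * ?r f g * v g)
        = complex_of_real (\<Sum>f\<in>?B. if f \<in> T then c * (cmod (v f))\<^sup>2 else 0)" for v
  proof -
    have "(\<Sum>f\<in>?B. \<Sum>g\<in>?B. cnj (v f) * ?r f g * v g)
        = (\<Sum>f\<in>?B. complex_of_real (if f \<in> T then c * (cmod (v f))\<^sup>2 else 0))"
    proof (rule sum.cong[OF refl])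
      fix f assume fb: "f \<in> ?B"
      have "(\<Sum>g\<in>?B. cnj (v f) * ?r f g * v g) = (\<Sum>g\<in>?B. if g = f then (if f \<in> T then cnj (v f) * c * v f else 0) else 0)"
        by (rule sum.cong) auto
      also have "\<dots> = (if f \<in> T then cnj (v f) * c * v f else 0)"
        using fB fb by (simp add: sum.delta)
      also have "\<dots> = complex_of_real (if f \<in> T then c * (cmod (v f))\<^sup>2 else 0)"
      proof -
        have h: "cnj (v f) * c * v f = complex_of_real (c * (cmod (v f))\<^sup>2)"
        proof -
          have "cnj (v f) * c * v f = complex_of_real c * (v f * cnj (v f))" by (simp only: mult_ac)
          also have "\<dots> = complex_of_real c * complex_of_real ((cmod (v f))\<^sup>2)" by (simp only: complex_norm_square)
          finally show ?thesis by (simp only: of_real_mult)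
        qed
        show ?thesis by (cases "f \<in> T") (simp_all only: h if_True if_False of_real_0)
      qed
      finally show "(\<Sum>g\<in>?B. cnj (v f) * ?r f g * v g) = complex_of_real (if f \<in> T then c * (cmod (v f))\<^sup>2 else 0)" .
    qed
    also have "\<dots> = complex_of_real (\<Sum>f\<in>?B. if f \<in> T then c * (cmod (v f))\<^sup>2 else 0)"
      by simp
    finally show ?thesis .
  qed
  have trace: "(\<Sum>f\<in>?B. ?r f f) = 1"
  proof -
    have "(\<Sum>f\<in>?B. ?r f f) = (\<Sum>f\<in>?B. if f \<in> T then complex_of_real c else 0)" by simp
    also have "\<dots> = (\<Sum>f\<in>?B \<inter> T. complex_of_real c)" using fB by (simp only: sum.inter_restrict)
    also have "?B \<inter> T = T" using T by blast
    also have "(\<Sum>f\<in>T. complex_of_real c) = complex_of_real (real (card T) * c)" by simp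
    finally show ?thesis using tr by simp
  qed
  show ?thesis
    unfolding density_ops_def
  proof (intro CollectI conjI allI ballI)
    fix f g show "f \<notin> ?B \<or> g \<notin> ?B \<longrightarrow> ?r f g = 0" using T by auto
  next
    fix f g show "?r g f = cnj (?r f g)" by auto
  next
    fix v :: "(nat \<Rightarrow> nat) \<Rightarrow> complex"
    show "Im (\<Sum>f\<in>?B. \<Sum>g\<in>?B. cnj (v f) * ?r f g * v g) = 0" unfolding quad by simp
    show "Re (\<Sum>f\<in>?B. \<Sum>g\<in>?B. cnj (v f) * ?r f g * v g) \<ge> 0" unfolding quad
      using c by (simp add: sum_nonneg)
  next
    show "(\<Sum>f\<in>?B. ?r f f) = 1" by (rule trace)
  qed
qed

definition rhos :: "nat set \<Rightarrow> op" where
  "rhos X = (\<lambda>g h. if g = h \<and> g \<in> {ind {}, ind X} then complex_of_real (1/2) else 0)"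

lemma restr_ind: "restr (ind A) X = ind (A \<inter> X)"
  by (auto simp: restr_def ind_def)

lemma ind_inj: "ind A = ind B \<Longrightarrow> A = B"
  unfolding ind_def by (metis (full_types) one_neq_zero subsetI subset_antisym)

lemma ind_basis: "A \<subseteq> X \<Longrightarrow> \<forall>i\<in>X. 1 < d i \<Longrightarrow> ind A \<in> basis_idx d X"
  by (auto simp: basis_idx_def ind_def)

lemma part_inter:
  assumes "partition_on L P" "A \<in> P" "X \<in> P"
  shows "A \<inter> X = (if A = X then X else {})"
  using assms unfolding partition_on_def disjoint_def by auto

lemma part_fin: "partition_on L P \<Longrightarrow> finite L \<Longrightarrow> finite P"
  unfolding partition_on_def by (metis finite_UnionD)

lemma tensor_diag:
  "f \<in> basis_idx d L \<Longrightarrow> tensor_over d L P r f f = (\<Prod>X\<in>P. r X (restr f X) (restr f X))"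
  by (simp add: tensor_over_def)

lemma rhos_diag: "rhos X g g \<noteq> 0 \<longleftrightarrow> g = ind {} \<or> g = ind X"
  by (auto simp: rhos_def)

lemma refines_of_unc:
  assumes L: "finite L" and d: "\<forall>i\<in>L. 1 < d i"
    and pi: "partition_on L \<pi>" and sg: "partition_on L \<sigma>"
    and in_unc: "tensor_over d L \<pi> rhos \<in> D_unc d L \<sigma>"
  shows "refines \<pi> \<sigma>"
proof (rule ccontr)
  assume "\<not> refines \<pi> \<sigma>"
  then obtain X where X: "X \<in> \<pi>" and nX: "\<forall>Y\<in>\<sigma>. \<not> X \<subseteq> Y" unfolding refines_def by blast
  from in_unc obtain \<tau> where eq: "tensor_over d L \<pi> rhos = tensor_over d L \<sigma> \<tau>"
    unfolding D_unc_def by blast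
  have finpi: "finite \<pi>" using part_fin[OF pi L] .
  have finsg: "finite \<sigma>" using part_fin[OF sg L] .
  have XL: "X \<subseteq> L" using pi X unfolding partition_on_def by blast
  have "X \<noteq> {}" using pi X unfolding partition_on_def by blast
  then obtain i where iX: "i \<in> X" by blast
  then have "i \<in> \<Union>\<sigma>" using XL sg unfolding partition_on_def by blast
  then obtain Y1 where Y1: "Y1 \<in> \<sigma>" "i \<in> Y1" by blast
  obtain j where jX: "j \<in> X" and jY: "j \<notin> Y1" using nX Y1 by blast
  have Y1L: "Y1 \<subseteq> L" using sg Y1 unfolding partition_on_def by blast
  have b0: "ind {} \<in> basis_idx d L" using ind_basis[of "{}" L d] d by simp
  have b1: "ind L \<in> basis_idx d L" using ind_basis[of L L d] d by simp
  have bg: "ind Y1 \<in> basis_idx d L" using ind_basis[OF Y1L d] .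
  have p0: "tensor_over d L \<pi> rhos (ind {}) (ind {}) \<noteq> 0"
    using finpi by (simp add: tensor_diag[OF b0] restr_ind rhos_diag prod_zero_iff)
  have p1: "tensor_over d L \<pi> rhos (ind L) (ind L) \<noteq> 0"
  proof -
    have "\<forall>Z\<in>\<pi>. L \<inter> Z = Z" using pi unfolding partition_on_def by blast
    then show ?thesis
      using finpi by (simp add: tensor_diag[OF b1] restr_ind rhos_diag prod_zero_iff)
  qed
  have pg: "tensor_over d L \<pi> rhos (ind Y1) (ind Y1) = 0"
  proof -
    have "Y1 \<inter> X \<noteq> {}" using iX Y1 by blast
    moreover have "Y1 \<inter> X \<noteq> X" using jX jY by blast
    ultimately have "restr (ind Y1) X \<noteq> ind {}" "restr (ind Y1) X \<noteq> ind X"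
      by (metis restr_ind ind_inj)+
    then have "rhos X (restr (ind Y1) X) (restr (ind Y1) X) = 0"
      using rhos_diag by blast
    then show ?thesis using finpi X by (auto simp: tensor_diag[OF bg] prod_zero_iff)
  qed
  have s0: "\<forall>Y\<in>\<sigma>. \<tau> Y (ind {}) (ind {}) \<noteq> 0"
    using p0 finsg by (simp add: eq tensor_diag[OF b0] restr_ind prod_zero_iff)
  have s1: "\<tau> Y1 (ind Y1) (ind Y1) \<noteq> 0"
  proof -
    have "\<forall>Z\<in>\<sigma>. L \<inter> Z = Z" using sg unfolding partition_on_def by blast
    then have "\<forall>Y\<in>\<sigma>. \<tau> Y (ind Y) (ind Y) \<noteq> 0"
      using p1 finsg by (simp add: eq tensor_diag[OF b1] restr_ind prod_zero_iff)
    then show ?thesis using Y1 by blast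
  qed
  have "tensor_over d L \<sigma> \<tau> (ind Y1) (ind Y1) \<noteq> 0"
  proof -
    have "\<forall>Y\<in>\<sigma>. \<tau> Y (restr (ind Y1) Y) (restr (ind Y1) Y) \<noteq> 0"
    proof
      fix Y assume Y: "Y \<in> \<sigma>"
      show "\<tau> Y (restr (ind Y1) Y) (restr (ind Y1) Y) \<noteq> 0"
      proof (cases "Y = Y1")
        case True then show ?thesis using s1 by (simp add: restr_ind)
      next
        case False then have "Y1 \<inter> Y = {}" using part_inter[OF sg Y1(1) Y] by simp
        then show ?thesis using s0 Y by (simp add: restr_ind)
      qed
    qed
    then show ?thesis using finsg by (simp add: tensor_diag[OF bg] prod_zero_iff)
  qed
  with pg eq show False by simp
qed

lemma part_sub: "partition_on L P \<Longrightarrow> X \<in> P \<Longrightarrow> X \<subseteq> L"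
  unfolding partition_on_def by blast

lemma part_ne: "partition_on L P \<Longrightarrow> X \<in> P \<Longrightarrow> X \<noteq> {}"
  unfolding partition_on_def by blast

lemma part_cover: "partition_on L P \<Longrightarrow> i \<in> L \<Longrightarrow> \<exists>X\<in>P. i \<in> X"
  unfolding partition_on_def by blast

lemma Union_inter_block:
  assumes pi: "partition_on L \<pi>" and c: "c \<subseteq> \<pi>" and X: "X \<in> \<pi>"
  shows "\<Union>c \<inter> X = (if X \<in> c then X else {})"
proof -
  have "\<And>A. A \<in> c \<Longrightarrow> A \<inter> X = (if A = X then X else {})" using part_inter[OF pi] c X by blast
  then show ?thesis by auto (metis IntI empty_iff)+
qed

lemma rhos_density:
  assumes L: "finite L" and d: "\<forall>i\<in>L. 1 < d i" and pi: "partition_on L \<pi>" and X: "X \<in> \<pi>"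
  shows "rhos X \<in> density_ops d X"
proof -
  have XL: "X \<subseteq> L" using part_sub[OF pi X] .
  have ne: "ind {} \<noteq> ind X" using part_ne[OF pi X] ind_inj by metis
  have "(\<lambda>f g. if f = g \<and> f \<in> {ind {}, ind X} then complex_of_real (1/2) else 0) \<in> density_ops d X"
  proof (rule diag_density)
    have dX: "\<forall>i\<in>X. 1 < d i" using XL d by blast
    show "finite X" using XL L finite_subset by blast
    show "{ind {}, ind X} \<subseteq> basis_idx d X" using ind_basis[OF _ dX] by blast
    show "real (card {ind {}, ind X}) * (1 / 2) = 1" using ne by simp
  qed simp
  then show ?thesis unfolding rhos_def .
qed

lemma tensor_rho_eq:
  assumes L: "finite L" and d: "\<forall>i\<in>L. 1 < d i" and pi: "partition_on L \<pi>"
  shows "tensor_over d L \<pi> rhos = (\<lambda>f g. if f = g \<and> f \<in> (\<lambda>c. ind (\<Union>c)) ` Pow \<pi>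
            then complex_of_real ((1/2) ^ card \<pi>) else 0)"
proof (intro ext)
  fix f g
  let ?S = "(\<lambda>c. ind (\<Union>c)) ` Pow \<pi>"
  have finpi: "finite \<pi>" using part_fin[OF pi L] .
  have SB: "?S \<subseteq> basis_idx d L"
  proof
    fix h assume "h \<in> ?S"
    then obtain c where c: "c \<subseteq> \<pi>" "h = ind (\<Union>c)" by blast
    have "\<Union>c \<subseteq> L" using c part_sub[OF pi] by blast
    then show "h \<in> basis_idx d L" using c ind_basis d by blast
  qed
  show "tensor_over d L \<pi> rhos f g = (if f = g \<and> f \<in> ?S then complex_of_real ((1/2) ^ card \<pi>) else 0)"
  proof (cases "f \<in> basis_idx d L \<and> g \<in> basis_idx d L")
    case False
    then show ?thesis using SB by (auto simp: tensor_over_def)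
  next
    case True
    then have fB: "f \<in> basis_idx d L" and gB: "g \<in> basis_idx d L" by auto
    show ?thesis
    proof (cases "f = g")
      case False
      then obtain i where i: "f i \<noteq> g i" by blast
      have iL: "i \<in> L"
      proof (rule ccontr)
        assume "i \<notin> L" then show False using fB gB i by (simp add: basis_idx_def)
      qed
      then obtain X where X: "X \<in> \<pi>" "i \<in> X" using part_cover[OF pi] by blast
      have "restr f X \<noteq> restr g X" using X i by (metis restr_def)
      then have "rhos X (restr f X) (restr g X) = 0" by (simp add: rhos_def)
      then have "(\<Prod>X\<in>\<pi>. rhos X (restr f X) (restr g X)) = 0" using finpi X by (auto simp: prod_zero_iff)
      then show ?thesis using True False by (simp add: tensor_over_def)
    next
      case True
      note g = True
      show ?thesis
      proof (cases "f \<in> ?S")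
        case True
        then obtain c where c: "c \<subseteq> \<pi>" "f = ind (\<Union>c)" by blast
        have "\<And>X. X \<in> \<pi> \<Longrightarrow> rhos X (restr f X) (restr f X) = complex_of_real (1/2)"
        proof -
          fix X assume X: "X \<in> \<pi>"
          have "restr f X = ind (if X \<in> c then X else {})"
            using c Union_inter_block[OF pi c(1) X] by (simp add: restr_ind)
          then show "rhos X (restr f X) (restr f X) = complex_of_real (1/2)"
            by (simp add: rhos_def)
        qed
        then have "(\<Prod>X\<in>\<pi>. rhos X (restr f X) (restr f X)) = (\<Prod>X\<in>\<pi>. complex_of_real (1/2))"
          by (rule prod.cong[OF refl])
        also have "\<dots> = complex_of_real ((1/2) ^ card \<pi>)" by (simp add: of_real_power)
        finally show ?thesis using g True fB by (simp add: tensor_diag)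
      next
        case False
        have "\<exists>X\<in>\<pi>. restr f X \<noteq> ind {} \<and> restr f X \<noteq> ind X"
        proof (rule ccontr)
          assume "\<not> ?thesis"
          then have all: "\<forall>X\<in>\<pi>. restr f X = ind {} \<or> restr f X = ind X" by blast
          define c where "c = {X\<in>\<pi>. restr f X = ind X}"
          have c\<pi>: "c \<subseteq> \<pi>" unfolding c_def by blast
          have "f = ind (\<Union>c)"
          proof
            fix i show "f i = ind (\<Union>c) i"
            proof (cases "i \<in> L")
              case False
              then have "i \<notin> \<Union>c" using c\<pi> part_sub[OF pi] by blast
              then show ?thesis using False fB by (auto simp: basis_idx_def ind_def)
            next
              case True
              then obtain X where X: "X \<in> \<pi>" "i \<in> X" using part_cover[OF pi] by blast
              have fi: "f i = restr f X i" using X by (simp add: restr_def)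
              have "\<Union>c \<inter> X = (if X \<in> c then X else {})" using Union_inter_block[OF pi c\<pi> X(1)] .
              then have "ind (\<Union>c) i = ind (if X \<in> c then X else {}) i" using X(2)
                by (auto simp: ind_def)
              moreover have "restr f X = ind (if X \<in> c then X else {})"
                using all X(1) unfolding c_def by auto
              ultimately show ?thesis using fi by simp
            qed
          qed
          then have "f \<in> ?S" using c\<pi> by blast
          then show False using False by blast
        qed
        then obtain X where X: "X \<in> \<pi>" "restr f X \<noteq> ind {}" "restr f X \<noteq> ind X" by blast
        then have "rhos X (restr f X) (restr f X) = 0" by (simp add: rhos_def)
        then have "(\<Prod>X\<in>\<pi>. rhos X (restr f X) (restr f X)) = 0" using finpi X by (auto simp: prod_zero_iff)
        then show ?thesis using g False fB by (simp add: tensor_diag)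
      qed
    qed
  qed
qed

lemma card_S:
  assumes L: "finite L" and pi: "partition_on L \<pi>"
  shows "card ((\<lambda>c. ind (\<Union>c)) ` Pow \<pi>) = 2 ^ card \<pi>"
proof -
  have finpi: "finite \<pi>" using part_fin[OF pi L] .
  have "inj_on (\<lambda>c. ind (\<Union>c)) (Pow \<pi>)"
  proof (rule inj_onI)
    fix a b assume a: "a \<in> Pow \<pi>" and b: "b \<in> Pow \<pi>" and e: "ind (\<Union>a) = ind (\<Union>b)"
    then have U: "\<Union>a = \<Union>b" using ind_inj by blast
    have *: "\<And>a b. a \<subseteq> \<pi> \<Longrightarrow> b \<subseteq> \<pi> \<Longrightarrow> \<Union>a = \<Union>b \<Longrightarrow> a \<subseteq> b"
    proof
      fix a b X assume a: "a \<subseteq> \<pi>" and b: "b \<subseteq> \<pi>" and U: "\<Union>a = \<Union>b" and X: "X \<in> a"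
      have "X \<noteq> {}" using part_ne[OF pi] a X by blast
      then obtain x where x: "x \<in> X" by blast
      then have "x \<in> \<Union>b" using U X by blast
      then obtain Y where Y: "Y \<in> b" "x \<in> Y" by blast
      have "Y \<inter> X = (if Y = X then X else {})" using part_inter[OF pi, of Y X] a b X Y by blast
      then have "Y = X" using x Y by (metis empty_iff IntI)
      then show "X \<in> b" using Y by simp
    qed
    have "a \<subseteq> b" using *[of a b] a b U by blast
    moreover have "b \<subseteq> a" using *[of b a] a b U by blast
    ultimately show "a = b" by blast
  qed
  then have "card ((\<lambda>c. ind (\<Union>c)) ` Pow \<pi>) = card (Pow \<pi>)" by (rule card_image)
  also have "\<dots> = 2 ^ card \<pi>" using finpi by (rule card_Pow)
  finally show ?thesis .
qed

lemma rho_unc: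
  assumes L: "finite L" and d: "\<forall>i\<in>L. 1 < d i" and pi: "partition_on L \<pi>"
  shows "tensor_over d L \<pi> rhos \<in> D_unc d L \<pi>"
proof -
  let ?S = "(\<lambda>c. ind (\<Union>c)) ` Pow \<pi>"
  have SB: "?S \<subseteq> basis_idx d L"
  proof
    fix h assume "h \<in> ?S"
    then obtain c where c: "c \<subseteq> \<pi>" "h = ind (\<Union>c)" by blast
    have "\<Union>c \<subseteq> L" using c part_sub[OF pi] by blast
    then show "h \<in> basis_idx d L" using c ind_basis d by blast
  qed
  have "real (card ?S) * (1/2) ^ card \<pi> = 1"
    using card_S[OF L pi] by (simp add: power_one_over)
  then have "(\<lambda>f g. if f = g \<and> f \<in> ?S then complex_of_real ((1/2) ^ card \<pi>) else 0) \<in> density_ops d L"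
    by (intro diag_density[OF L SB]) auto
  then have "tensor_over d L \<pi> rhos \<in> density_ops d L"
    using tensor_rho_eq[OF L d pi] by simp
  then show ?thesis unfolding D_unc_def using rhos_density[OF L d pi] by blast
qed

lemma finite_PII: "finite L \<Longrightarrow> finite (PII L)"
proof -
  assume L: "finite L"
  have "PI L \<subseteq> Pow (Pow L)" unfolding PI_def partition_on_def by blast
  then have "finite (PI L)" using L by (meson finite_Pow_iff finite_subset)
  moreover have "PII L \<subseteq> Pow (PI L)" unfolding PII_def by blast
  ultimately show ?thesis by (meson finite_Pow_iff finite_subset)
qed

lemma C_nonempty:
  assumes L: "finite L" and d: "\<forall>i\<in>L. 1 < d i" and P2: "P2 \<subseteq> PII L"
    and ch: "\<forall>a\<in>P2. \<forall>b\<in>P2. a \<subseteq> b \<or> b \<subseteq> a" and Xi: "\<Xi> \<in> PIII P2"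
  shows "\<exists>\<rho>. \<rho> \<in> C_unc d L P2 \<Xi>"
proof -
  have finP2: "finite P2" using finite_PII[OF L] P2 finite_subset by blast
  have XiP2: "\<Xi> \<subseteq> P2" and Xine: "\<Xi> \<noteq> {}"
    and up: "\<forall>a\<in>\<Xi>. \<forall>b\<in>P2. a \<subseteq> b \<longrightarrow> b \<in> \<Xi>" using Xi unfolding PIII_def by auto
  have "\<Inter>\<Xi> \<in> \<Xi>"
  proof (rule Inter_in_chain[where \<A> = P2])
    show "finite \<Xi>" using XiP2 finP2 finite_subset by blast
    show "\<Xi> \<noteq> {}" by (rule Xine)
    show "subset.chain P2 \<Xi>" unfolding subset.chain_def using XiP2 ch by blast
  qed
  define m where "m = \<Inter>\<Xi>"
  have mXi: "m \<in> \<Xi>" using \<open>\<Inter>\<Xi> \<in> \<Xi>\<close> m_def by simp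
  have mII: "m \<in> PII L" using mXi XiP2 P2 by blast
  have "\<exists>\<pi>\<in>m. \<forall>\<xi>'\<in>P2 - \<Xi>. \<pi> \<notin> \<xi>'"
  proof (cases "P2 - \<Xi> = {}")
    case True
    then show ?thesis using mII unfolding PII_def by blast
  next
    case False
    have MM: "\<Union>(P2 - \<Xi>) \<in> P2 - \<Xi>"
    proof (rule Union_in_chain[where \<A> = P2])
      show "finite (P2 - \<Xi>)" using finP2 by blast
      show "P2 - \<Xi> \<noteq> {}" by (rule False)
      show "subset.chain P2 (P2 - \<Xi>)" unfolding subset.chain_def using ch by blast
    qed
    define M where "M = \<Union>(P2 - \<Xi>)"
    have "M \<subseteq> m \<or> m \<subseteq> M" using ch MM mXi XiP2 M_def by blast
    moreover have "\<not> m \<subseteq> M" using up mXi MM M_def by blast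
    ultimately have "M \<subset> m" by blast
    then obtain \<pi> where "\<pi> \<in> m" "\<pi> \<notin> M" by blast
    then show ?thesis unfolding M_def by blast
  qed
  then obtain \<pi> where pim: "\<pi> \<in> m" and pnot: "\<forall>\<xi>'\<in>P2 - \<Xi>. \<pi> \<notin> \<xi>'" by blast
  have piPI: "\<pi> \<in> PI L" using pim mII unfolding PII_def by blast
  then have pi: "partition_on L \<pi>" unfolding PI_def by simp
  define \<rho> where "\<rho> = tensor_over d L \<pi> rhos"
  have unc: "\<rho> \<in> D_unc d L \<pi>" unfolding \<rho>_def by (rule rho_unc[OF L d pi])
  then have dens: "\<rho> \<in> density_ops d L" unfolding D_unc_def by blast
  have A: "\<rho> \<in> DS_unc d L \<xi>" if "\<xi> \<in> \<Xi>" for \<xi>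
  proof -
    have "m \<subseteq> \<xi>" using that m_def by blast
    then show ?thesis using pim unc unfolding DS_unc_def by blast
  qed
  have B: "\<rho> \<notin> DS_unc d L \<xi>'" if "\<xi>' \<in> P2 - \<Xi>" for \<xi>'
  proof
    assume "\<rho> \<in> DS_unc d L \<xi>'"
    then obtain \<sigma> where \<sigma>: "\<sigma> \<in> \<xi>'" "\<rho> \<in> D_unc d L \<sigma>" unfolding DS_unc_def by blast
    have II: "\<xi>' \<in> PII L" using that P2 by blast
    then have "\<sigma> \<in> PI L" using \<sigma> unfolding PII_def by blast
    then have "partition_on L \<sigma>" unfolding PI_def by simp
    then have "refines \<pi> \<sigma>" using refines_of_unc[OF L d pi] \<sigma>(2) \<rho>_def by blast
    then have "\<pi> \<in> \<xi>'" using II \<sigma>(1) piPI unfolding PII_def by blast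
    then show False using pnot that by blast
  qed
  have "\<rho> \<in> C_unc d L P2 \<Xi>" unfolding C_unc_def using A B dens by blast
  then show ?thesis by blast
qed

lemma C_separate:
  assumes "\<xi> \<in> \<Xi>" "\<xi> \<in> P2" "\<xi> \<notin> \<Upsilon>" "\<rho> \<in> C_unc d L P2 \<Xi>"
  shows "\<rho> \<notin> C_unc d L P2 \<Upsilon>"
  using assms unfolding C_unc_def by blast

theorem proposition6:
  fixes n :: nat and d :: "nat \<Rightarrow> nat"
    and P2 :: "nat set set set set"
    and \<Xi> \<Upsilon> :: "nat set set set set"
  assumes "n \<ge> 1"
    and "\<forall>i\<in>{1..n}. 1 < d i"
    and "P2 \<subseteq> PII {1..n}" and "P2 \<noteq> {}"
    and "\<forall>a\<in>P2. \<forall>b\<in>P2. a \<subseteq> b \<or> b \<subseteq> a"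
    and "\<Xi> \<in> PIII P2" and "\<Upsilon> \<in> PIII P2"
  shows "C_unc d {1..n} P2 \<Xi> = C_unc d {1..n} P2 \<Upsilon> \<longleftrightarrow> \<Xi> = \<Upsilon>"
proof
  assume eq: "C_unc d {1..n} P2 \<Xi> = C_unc d {1..n} P2 \<Upsilon>"
  show "\<Xi> = \<Upsilon>"
  proof (rule ccontr)
    assume ne: "\<Xi> \<noteq> \<Upsilon>"
    have sub: "\<Xi> \<subseteq> P2" "\<Upsilon> \<subseteq> P2" using assms(6,7) unfolding PIII_def by auto
    obtain \<rho>1 where r1: "\<rho>1 \<in> C_unc d {1..n} P2 \<Xi>" using C_nonempty[OF _ assms(2,3,5,6)] by blast
    obtain \<rho>2 where r2: "\<rho>2 \<in> C_unc d {1..n} P2 \<Upsilon>" using C_nonempty[OF _ assms(2,3,5,7)] by blast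
    show False
    proof (cases "\<Xi> \<subseteq> \<Upsilon>")
      case True
      then obtain \<xi> where "\<xi> \<in> \<Upsilon>" "\<xi> \<notin> \<Xi>" using ne by blast
      then show False using C_separate[of \<xi> \<Upsilon> P2 \<Xi> \<rho>2] r2 eq sub by blast
    next
      case False
      then obtain \<xi> where "\<xi> \<in> \<Xi>" "\<xi> \<notin> \<Upsilon>" by blast
      then show False using C_separate[of \<xi> \<Xi> P2 \<Upsilon> \<rho>1] r1 eq sub by blast
    qed
  qed
qed simp

end
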